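(* Let $A$ be a real $m\times m$ matrix, $f_\delta\in\mathbb{R}^m$, $q\in(0,1)$, $\alpha_0>0$, and define $G_0=0$, $G_n=qG_{n-1}+(1-q)\alpha_0q^n\|Q_{\alpha_0q^n}^{-1}f_\delta\|$ for $n\ge1$. Let $D_n:=\alpha_0q^{n+1}\|Q_{\alpha_0q^{n+1}}^{-1}f_\delta\|-G_n$, so that $G_{n+1}-G_n=(1-q)D_n$. If $D_{n_c}<0$ for some integer $n_c\ge1$ (equivalently $G_{n_c+1}<G_{n_c}$), then $D_n<0$ for all $n\ge n_c$; consequently $G_{n+1}<G_n$ for all $n\ge n_c$.
   Context: $A^*$ is the transpose of $A$, $Q:=AA^*$, $Q_a:=Q+aI$ for $a>0$; $\|\cdot\|$ is the Euclidean norm. *)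

theory Defs
  imports "HOL-Analysis.Analysis"
begin

definition Qmat :: "real^'m^'m \<Rightarrow> real^'m^'m" where
  "Qmat A = A ** transpose A"

definition Qreg :: "real^'m^'m \<Rightarrow> real \<Rightarrow> real^'m^'m" where
  "Qreg A a = Qmat A + mat a"

fun Gseq :: "real^'m^'m \<Rightarrow> real^'m \<Rightarrow> real \<Rightarrow> real \<Rightarrow> nat \<Rightarrow> real" where
  "Gseq A f q \<alpha>0 0 = 0"
| "Gseq A f q \<alpha>0 (Suc n) = q * Gseq A f q \<alpha>0 n
     + (1 - q) * \<alpha>0 * q ^ Suc n * norm (matrix_inv (Qreg A (\<alpha>0 * q ^ Suc n)) *v f)"

definition Dseq :: "real^'m^'m \<Rightarrow> real^'m \<Rightarrow> real \<Rightarrow> real \<Rightarrow> nat \<Rightarrow> real" where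
  "Dseq A f q \<alpha>0 n = \<alpha>0 * q ^ (n + 1) * norm (matrix_inv (Qreg A (\<alpha>0 * q ^ (n + 1))) *v f)
     - Gseq A f q \<alpha>0 n"

end

theory Submission
  imports Defs
begin

lemma Q_inner: "x \<bullet> (Qmat A *v y) = (transpose A *v x) \<bullet> (transpose A *v y)"
  unfolding Qmat_def
  by (metis dot_lmul_matrix matrix_vector_mul_assoc transpose_matrix_vector transpose_transpose)

lemma Q_psd: "0 \<le> x \<bullet> (Qmat A *v x)"
  by (simp add: Q_inner)

lemma mat_apply: "mat a *v x = a *\<^sub>R (x::real^'n)"
  apply (vector matrix_vector_mult_def mat_def)
  apply (simp add: if_distrib if_distribR cong del: if_weak_cong)
  done

lemma Qreg_apply: "Qreg A a *v x = Qmat A *v x + a *\<^sub>R x"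
  by (simp add: Qreg_def matrix_vector_mult_add_rdistrib mat_apply)

lemma Qreg_inj: assumes "0 < a" shows "inj ((*v) (Qreg A a))"
proof -
  have "x = 0" if "Qreg A a *v x = 0" for x
  proof -
    have "0 = x \<bullet> (Qreg A a *v x)" using that by simp
    also have "\<dots> = x \<bullet> (Qmat A *v x) + a * (x \<bullet> x)" by (simp add: Qreg_apply inner_add_right)
    finally have "a * (x \<bullet> x) \<le> 0" using Q_psd[of x A] by linarith
    then have "x \<bullet> x \<le> 0" using assms by (simp add: mult_le_0_iff)
    then show ?thesis by (metis inner_eq_zero_iff order_antisym inner_ge_zero)
  qed
  then show ?thesis
    by (metis matrix_left_invertible_injective matrix_left_invertible_ker)
qed

lemma Qreg_inv: assumes "0 < a" shows "Qreg A a *v (matrix_inv (Qreg A a) *v y) = y"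
proof -
  have "invertible (Qreg A a)"
    using Qreg_inj[OF assms] invertible_left_inverse matrix_left_invertible_injective by blast
  then have "Qreg A a ** matrix_inv (Qreg A a) = mat 1"
    unfolding invertible_def matrix_inv_def by (rule someI_ex[THEN conjunct1])
  then show ?thesis by (metis matrix_vector_mul_assoc matrix_vector_mul_lid)
qed


lemma h_mono:
  assumes b: "0 < b" and ba: "b \<le> a"
  shows "b * norm (matrix_inv (Qreg A b) *v f) \<le> a * norm (matrix_inv (Qreg A a) *v f)"
proof -
  have a: "0 < a" using b ba by linarith
  define Q where "Q = Qmat A"
  define u where "u = matrix_inv (Qreg A a) *v f"
  define v where "v = matrix_inv (Qreg A b) *v f"
  define z where "z = matrix_inv (Qreg A a) *v (b *\<^sub>R v)"
  define k where "k = a / b - 1"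
  have hu: "Q *v u + a *\<^sub>R u = f" using Qreg_inv[OF a, of A f] by (simp add: Qreg_apply Q_def u_def)
  have hv: "Q *v v + b *\<^sub>R v = f" using Qreg_inv[OF b, of A f] by (simp add: Qreg_apply Q_def v_def)
  have hz: "Q *v z + a *\<^sub>R z = b *\<^sub>R v" using Qreg_inv[OF a, of A "b *\<^sub>R v"] by (simp add: Qreg_apply Q_def z_def)
  have QQz: "Q *v (Q *v z) = b *\<^sub>R (Q *v v) - a *\<^sub>R (Q *v z)"
  proof -
    have "Q *v (Q *v z + a *\<^sub>R z) = Q *v (b *\<^sub>R v)" using hz by simp
    then show ?thesis by (simp add: matrix_vector_right_distrib matrix_vector_mult_scaleR algebra_simps)
  qed
  have k1: "1 + k = a / b" unfolding k_def by simp
  have kb: "b * (1 + k) = a" using k1 b by simp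
  have k0: "0 \<le> k" unfolding k_def using b ba by (simp add: field_simps)
  have eq1: "Qreg A a *v (a *\<^sub>R u) = a *\<^sub>R f"
    using hu by (simp add: Qreg_apply Q_def[symmetric] matrix_vector_mult_scaleR algebra_simps)
  have "Qreg A a *v (b *\<^sub>R v + k *\<^sub>R (Q *v z)) = b *\<^sub>R (Q *v v) + k *\<^sub>R (Q *v (Q *v z)) + a *\<^sub>R (b *\<^sub>R v) + a *\<^sub>R (k *\<^sub>R (Q *v z))"
    by (simp add: Qreg_apply Q_def[symmetric] matrix_vector_mult_scaleR matrix_vector_right_distrib algebra_simps)
  also have "\<dots> = (b * (1 + k)) *\<^sub>R (Q *v v) + a *\<^sub>R (b *\<^sub>R v)"
    by (simp add: QQz algebra_simps)
  also have "\<dots> = a *\<^sub>R (Q *v v + b *\<^sub>R v)" by (simp only: kb[symmetric]) (simp add: algebra_simps)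
  also have "\<dots> = a *\<^sub>R f" by (simp add: hv)
  finally have "a *\<^sub>R u = b *\<^sub>R v + k *\<^sub>R (Q *v z)"
    using eq1 Qreg_inj[OF a, of A] by (metis injD)
  hence "norm (a *\<^sub>R u) ^ 2 = norm (b *\<^sub>R v) ^ 2 + 2 * k * ((b *\<^sub>R v) \<bullet> (Q *v z)) + k^2 * norm (Q *v z) ^ 2"
    apply (simp only: power2_norm_eq_inner)
    apply (simp add: inner_add_left inner_add_right inner_commute algebra_simps power2_eq_square)
    done
  moreover have "(b *\<^sub>R v) \<bullet> (Q *v z) \<ge> 0"
  proof -
    have "(b *\<^sub>R v) \<bullet> (Q *v z) = (Q *v z) \<bullet> (Q *v z) + a * (z \<bullet> (Q *v z))"
      by (simp add: hz[symmetric] inner_add_left)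
    moreover have "z \<bullet> (Q *v z) \<ge> 0" unfolding Q_def by (rule Q_psd)
    ultimately show ?thesis using a by simp
  qed
  ultimately have "norm (b *\<^sub>R v) ^ 2 \<le> norm (a *\<^sub>R u) ^ 2" using k0 by simp
  hence "norm (b *\<^sub>R v) \<le> norm (a *\<^sub>R u)" by (simp add: power_mono_iff)
  thus ?thesis using a b by (simp add: u_def v_def)
qed


lemma D_step:
  assumes q0: "0 < q" and q1: "q < 1" and a0: "0 < \<alpha>0"
  shows "Dseq A f q \<alpha>0 (Suc n) \<le> q * Dseq A f q \<alpha>0 n"
proof -
  define H where "H k = \<alpha>0 * q ^ k * norm (matrix_inv (Qreg A (\<alpha>0 * q ^ k)) *v f)" for k
  define G where "G = Gseq A f q \<alpha>0 n"
  have mono: "H (n + 2) \<le> H (n + 1)" unfolding H_def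
  proof (rule h_mono)
    show "0 < \<alpha>0 * q ^ (n + 2)" using q0 a0 by simp
    have "q ^ (n + 2) \<le> q ^ (n+1)" using q0 q1 by (intro power_decreasing) auto
    then show "\<alpha>0 * q ^ (n + 2) \<le> \<alpha>0 * q ^ (n + 1)" using a0 by simp
  qed
  have GS: "Gseq A f q \<alpha>0 (Suc n) = q * G + (1 - q) * H (n + 1)"
    unfolding G_def H_def by (simp only: Gseq.simps) (simp only: Suc_eq_plus1 mult.assoc)
  have D0: "Dseq A f q \<alpha>0 n = H (n + 1) - G" unfolding Dseq_def H_def G_def by (rule refl)
  have D1: "Dseq A f q \<alpha>0 (Suc n) = H (n + 2) - Gseq A f q \<alpha>0 (Suc n)"
    unfolding Dseq_def H_def by (simp only: Suc_eq_plus1 add.assoc one_add_one)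
  have "Dseq A f q \<alpha>0 (Suc n) = H (n + 2) - q * G - (1 - q) * H (n + 1)" using D1 GS by simp
  also have "\<dots> \<le> H (n + 1) - q * G - (1 - q) * H (n + 1)" using mono by simp
  also have "\<dots> = q * (H (n + 1) - G)" by (simp add: algebra_simps)
  finally show ?thesis using D0 by simp
qed

theorem lemma2p5:
  fixes A :: "real^'m^'m" and f :: "real^'m" and q \<alpha>0 :: real and nc :: nat
  assumes "0 < q" and "q < 1" and "0 < \<alpha>0"
    and "1 \<le> nc" and "Dseq A f q \<alpha>0 nc < 0"
  shows "\<forall>n\<ge>nc. Dseq A f q \<alpha>0 n < 0 \<and> Gseq A f q \<alpha>0 (n + 1) < Gseq A f q \<alpha>0 n"
proof (intro allI impI)
  fix n assume "nc \<le> n"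
  then have D: "Dseq A f q \<alpha>0 n < 0"
  proof (induction n rule: dec_induct)
    case base then show ?case using assms(5) .
  next
    case (step m)
    have "Dseq A f q \<alpha>0 (Suc m) \<le> q * Dseq A f q \<alpha>0 m" using D_step assms by blast
    also have "\<dots> < 0" using step.IH assms(1) by (simp add: mult_pos_neg)
    finally show ?case .
  qed
  have "Gseq A f q \<alpha>0 (n + 1) - Gseq A f q \<alpha>0 n = (1 - q) * Dseq A f q \<alpha>0 n"
    unfolding Dseq_def by (simp only: Suc_eq_plus1[symmetric] Gseq.simps) (simp add: algebra_simps)
  moreover have "(1 - q) * Dseq A f q \<alpha>0 n < 0" using D assms(2) by (simp add: mult_pos_neg)
  ultimately show "Dseq A f q \<alpha>0 n < 0 \<and> Gseq A f q \<alpha>0 (n + 1) < Gseq A f q \<alpha>0 n" using D by linarith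
qed

end
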